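(* Let $I\subseteq\mathbb{R}_+$ be a nonempty, non-singleton interval, let $n\in\mathbb{N}$, and let $\Phi: I\to\mathbb{R}_+$ be subadditive of order $n$. Then for all $x,y\in I$ with $x+y\in I$, $$\Phi(x+y)\leq \max\{\Phi(x)+(2^n-1)\Phi(y),\ (2^n-1)\Phi(x)+\Phi(y)\}.$$
   Context: $\mathbb{R}_+$ denotes the set of nonnegative real numbers. For $n\in\mathbb{N}$, a function $\Phi: I\to\mathbb{R}_+$ is called subadditive of order $n$ if for all $x,y\in I$ with $y>0$ and $x+y\in I$ one has $\Phi(x+y)\leq \Phi(x)+\frac{(x+y)^n-x^n}{y^n}\Phi(y)$. *)

theory Defs
  imports "HOL-Analysis.Analysis"
begin

definition subadditive_order :: "nat \<Rightarrow> real set \<Rightarrow> (real \<Rightarrow> real) \<Rightarrow> bool" where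
  "subadditive_order n I \<Phi> \<longleftrightarrow>
     (\<forall>x\<in>I. \<forall>y\<in>I. y > 0 \<longrightarrow> x + y \<in> I \<longrightarrow>
        \<Phi> (x + y) \<le> \<Phi> x + ((x + y) ^ n - x ^ n) / y ^ n * \<Phi> y)"

end

theory Submission
  imports Defs
begin

lemma key_ineq:
  fixes a b :: real
  assumes "0 \<le> a" "a \<le> b"
  shows "(a + b) ^ n - a ^ n \<le> (2 ^ n - 1) * b ^ n"
proof (induction n)
  case 0
  then show ?case by simp
next
  case (Suc n)
  have b0: "0 \<le> b" using assms by linarith
  have "(a + b) ^ Suc n - a ^ Suc n = (a + b) * ((a + b) ^ n - a ^ n) + b * a ^ n"
    by (simp add: algebra_simps)
  also have "\<dots> \<le> (2 * b) * ((2 ^ n - 1) * b ^ n) + b * b ^ n"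
  proof (rule add_mono)
    have "0 \<le> (a + b) ^ n - a ^ n" using assms b0 by (simp add: power_mono)
    then show "(a + b) * ((a + b) ^ n - a ^ n) \<le> (2 * b) * ((2 ^ n - 1) * b ^ n)"
      using Suc.IH assms b0 by (intro mult_mono) auto
    show "b * a ^ n \<le> b * b ^ n" using assms b0 by (simp add: mult_left_mono power_mono)
  qed
  also have "\<dots> = (2 ^ Suc n - 1) * b ^ Suc n" by (simp add: algebra_simps)
  finally show ?case .
qed

lemma key_frac:
  fixes a b :: real
  assumes "0 \<le> a" "a \<le> b" "0 < b" "0 \<le> p"
  shows "((a + b) ^ n - a ^ n) / b ^ n * p \<le> (2 ^ n - 1) * p"
proof -
  have "((a + b) ^ n - a ^ n) / b ^ n \<le> 2 ^ n - 1"
    using key_ineq[OF assms(1,2), of n] assms(3) by (simp add: divide_le_eq)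
  then show ?thesis using assms(4) by (rule mult_right_mono)
qed

theorem proposition2p5:
  fixes I :: "real set" and n :: nat and \<Phi> :: "real \<Rightarrow> real"
  assumes "is_interval I" and "I \<subseteq> {0..}"
    and "\<exists>a\<in>I. \<exists>b\<in>I. a \<noteq> b"
    and "\<forall>x\<in>I. \<Phi> x \<ge> 0"
    and "subadditive_order n I \<Phi>"
    and "x \<in> I" and "y \<in> I" and "x + y \<in> I"
  shows "\<Phi> (x + y) \<le> max (\<Phi> x + (2 ^ n - 1) * \<Phi> y) ((2 ^ n - 1) * \<Phi> x + \<Phi> y)"
proof -
  have x0: "x \<ge> 0" and y0: "y \<ge> 0" using assms(2,6,7) by auto
  have px: "\<Phi> x \<ge> 0" and py: "\<Phi> y \<ge> 0" using assms(4,6,7) by auto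
  have c: "(0::real) \<le> 2 ^ n - 1" by simp
  show ?thesis
  proof (cases "x \<le> y")
    case True
    show ?thesis
    proof (cases "y = 0")
      case True
      then have "\<Phi> (x + y) \<le> \<Phi> x + (2 ^ n - 1) * \<Phi> y" using py c by simp
      then show ?thesis by simp
    next
      case False
      then have yp: "y > 0" using y0 by simp
      have "\<Phi> (x + y) \<le> \<Phi> x + ((x + y) ^ n - x ^ n) / y ^ n * \<Phi> y"
        using assms(5,6,7,8) yp unfolding subadditive_order_def by blast
      also have "\<dots> \<le> \<Phi> x + (2 ^ n - 1) * \<Phi> y"
        using key_frac[OF x0 True yp py] by simp
      finally show ?thesis by simp
    qed
  next
    case False
    then have xp: "x > 0" using y0 by simp
    have le: "y \<le> x" using False by simp
    have "\<Phi> (y + x) \<le> \<Phi> y + ((y + x) ^ n - y ^ n) / x ^ n * \<Phi> x"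
      using assms(5,6,7,8) xp unfolding subadditive_order_def
      by (metis add.commute)
    also have "\<dots> \<le> \<Phi> y + (2 ^ n - 1) * \<Phi> x"
      using key_frac[OF y0 le xp px] by simp
    finally show ?thesis by (simp add: add.commute)
  qed
qed

end
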